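(* Let $\mathcal{H}$ be a reproducing kernel Hilbert space of functions on a set $X$, with multiplier algebra $\mathcal{M}(\mathcal{H})$. Let $(\phi_n)_{n\ge1}$ be a sequence of elements of the closed unit ball of $\mathcal{M}(\mathcal{H})$. Put $\Phi_0=1$ and $\Phi_n:=\phi_1\phi_2\cdots\phi_n$ for $n\ge1$. Assume there is a multiplier $\Phi\in\mathcal{M}(\mathcal{H})$ such that $\lim_{n\to\infty}\Phi_n(x)=\Phi(x)$ for every $x\in X$. Then for every $f\in\mathcal{H}$, \[ f=\Phi\, M_\Phi^{*}f+\sum_{n=1}^{\infty}\Phi_{n-1}\cdot Q_{\phi_n}M_{\Phi_{n-1}}^{*}f, \] where the series converges in the norm of $\mathcal{H}$.
   Context: For a multiplier $\phi\in\mathcal{M}(\mathcal{H})$, $M_\phi:\mathcal{H}\to\mathcal{H}$ denotes the multiplication operator $M_\phi g=\phi g$, and $M_\phi^*$ its Hilbert space adjoint. The multiplier norm of $\phi$ is the operator norm of $M_\phi$; the closed unit ball of $\mathcal{M}(\mathcal{H})$ consists of the multipliers with $\|M_\phi\|\le 1$. For $\phi\in\mathcal{M}(\mathcal{H})$ define $P_\phi:=M_\phi M_\phi^*$ and $Q_\phi:=I-M_\phi M_\phi^*$, where $I$ is the identity on $\mathcal{H}$. *)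

theory Defs
  imports Complex_Main
begin

text \<open>A reproducing kernel Hilbert space of complex-valued functions on the
  type 'x, given as a set H of functions together with an inner product ip
  (linear in the first argument, conjugate-linear in the second).\<close>

definition hnorm :: "(('x \<Rightarrow> complex) \<Rightarrow> ('x \<Rightarrow> complex) \<Rightarrow> complex) \<Rightarrow> ('x \<Rightarrow> complex) \<Rightarrow> real" where
  "hnorm ip f = sqrt (Re (ip f f))"

definition rkhs :: "('x \<Rightarrow> complex) set \<Rightarrow> (('x \<Rightarrow> complex) \<Rightarrow> ('x \<Rightarrow> complex) \<Rightarrow> complex) \<Rightarrow> bool" where
  "rkhs H ip \<longleftrightarrow>
     (\<lambda>x. 0) \<in> H \<and>
     (\<forall>f\<in>H. \<forall>g\<in>H. (\<lambda>x. f x + g x) \<in> H) \<and>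
     (\<forall>a. \<forall>f\<in>H. (\<lambda>x. a * f x) \<in> H) \<and>
     (\<forall>a. \<forall>f\<in>H. \<forall>g\<in>H. \<forall>h\<in>H. ip (\<lambda>x. a * f x + g x) h = a * ip f h + ip g h) \<and>
     (\<forall>f\<in>H. \<forall>g\<in>H. ip f g = cnj (ip g f)) \<and>
     (\<forall>f\<in>H. Im (ip f f) = 0 \<and> Re (ip f f) \<ge> 0) \<and>
     (\<forall>f\<in>H. ip f f = 0 \<longrightarrow> f = (\<lambda>x. 0)) \<and>
     (\<forall>u. (\<forall>n. u n \<in> H) \<and>
          (\<forall>e>0. \<exists>N. \<forall>m\<ge>N. \<forall>n\<ge>N. hnorm ip (\<lambda>x. u m x - u n x) < e)
          \<longrightarrow> (\<exists>g\<in>H. (\<lambda>n. hnorm ip (\<lambda>x. u n x - g x)) \<longlonglongrightarrow> 0)) \<and>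
     (\<forall>y. \<exists>k\<in>H. \<forall>f\<in>H. f y = ip f k)"

definition mult :: "('x \<Rightarrow> complex) \<Rightarrow> ('x \<Rightarrow> complex) \<Rightarrow> ('x \<Rightarrow> complex)" where
  "mult \<phi> f = (\<lambda>x. \<phi> x * f x)"

text \<open>Multipliers: functions phi with phi H contained in H and M_phi bounded
  (boundedness is automatic by the closed graph theorem).\<close>
definition multiplier :: "('x \<Rightarrow> complex) set \<Rightarrow> (('x \<Rightarrow> complex) \<Rightarrow> ('x \<Rightarrow> complex) \<Rightarrow> complex) \<Rightarrow> ('x \<Rightarrow> complex) \<Rightarrow> bool" where
  "multiplier H ip \<phi> \<longleftrightarrow> (\<forall>f\<in>H. mult \<phi> f \<in> H) \<and>
     (\<exists>C. \<forall>f\<in>H. hnorm ip (mult \<phi> f) \<le> C * hnorm ip f)"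

definition mult_ball :: "('x \<Rightarrow> complex) set \<Rightarrow> (('x \<Rightarrow> complex) \<Rightarrow> ('x \<Rightarrow> complex) \<Rightarrow> complex) \<Rightarrow> ('x \<Rightarrow> complex) \<Rightarrow> bool" where
  "mult_ball H ip \<phi> \<longleftrightarrow> multiplier H ip \<phi> \<and> (\<forall>f\<in>H. hnorm ip (mult \<phi> f) \<le> hnorm ip f)"

definition mult_adj :: "('x \<Rightarrow> complex) set \<Rightarrow> (('x \<Rightarrow> complex) \<Rightarrow> ('x \<Rightarrow> complex) \<Rightarrow> complex) \<Rightarrow> ('x \<Rightarrow> complex) \<Rightarrow> ('x \<Rightarrow> complex) \<Rightarrow> ('x \<Rightarrow> complex)" where
  "mult_adj H ip \<phi> h = (THE g. g \<in> H \<and> (\<forall>f\<in>H. ip (mult \<phi> f) h = ip f g))"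

definition Qop :: "('x \<Rightarrow> complex) set \<Rightarrow> (('x \<Rightarrow> complex) \<Rightarrow> ('x \<Rightarrow> complex) \<Rightarrow> complex) \<Rightarrow> ('x \<Rightarrow> complex) \<Rightarrow> ('x \<Rightarrow> complex) \<Rightarrow> ('x \<Rightarrow> complex)" where
  "Qop H ip \<phi> h = (\<lambda>x. h x - mult \<phi> (mult_adj H ip \<phi> h) x)"

definition partial_prod :: "(nat \<Rightarrow> 'x \<Rightarrow> complex) \<Rightarrow> nat \<Rightarrow> 'x \<Rightarrow> complex" where
  "partial_prod \<phi> n = (\<lambda>x. \<Prod>i\<in>{1..n}. \<phi> i x)"

end

theory Submission
  imports Defs
begin



lemma quad:
  fixes a b c :: real
  assumes h: "\<forall>s. 0 \<le> a - 2*s*b + s^2*b*c" and b: "b \<ge> 0" and c: "c \<ge> 0" and a: "a \<ge> 0"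
  shows "b \<le> a*c"
proof (cases "b = 0")
  case True then show ?thesis using a c by simp
next
  case False
  hence bp: "b > 0" using b by simp
  show ?thesis
  proof (cases "c = 0")
    case True
    have "0 \<le> a - 2*((a+1)/(2*b))*b + ((a+1)/(2*b))^2*b*c" using h by blast
    also have "\<dots> = -1" using True bp by (simp add: field_simps)
    finally show ?thesis by simp
  next
    case False
    hence cp: "c > 0" using c by simp
    have "0 \<le> a - 2*(1/c)*b + (1/c)^2*b*c" using h by blast
    also have "\<dots> = a - b/c" using cp by (simp add: field_simps power2_eq_square)
    finally have "b/c \<le> a" by simp
    thus ?thesis using cp by (simp add: field_simps)
  qed
qed

lemma mult_mult: "mult a (mult b f) = mult (\<lambda>x. a x * b x) f" by (simp add: mult_def mult.assoc)
lemma mult_one: "mult (\<lambda>x. 1) f = f" by (simp add: mult_def)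
lemma mult_lin: "mult \<psi> (\<lambda>x. a * u x + v x) = (\<lambda>x. a * mult \<psi> u x + mult \<psi> v x)"
  by (simp add: mult_def algebra_simps)
lemma mult_diff: "mult \<psi> (\<lambda>x. u x - v x) = (\<lambda>x. mult \<psi> u x - mult \<psi> v x)"
  by (simp add: mult_def algebra_simps)
lemma mult_zero: "mult \<psi> (\<lambda>x. 0) = (\<lambda>x. 0)" by (simp add: mult_def)

locale hs =
  fixes H :: "('x \<Rightarrow> complex) set" and ip :: "('x \<Rightarrow> complex) \<Rightarrow> ('x \<Rightarrow> complex) \<Rightarrow> complex"
  assumes rk: "rkhs H ip"
begin

abbreviation nm where "nm f \<equiv> hnorm ip f"

lemma zero_in: "(\<lambda>x. 0) \<in> H" using rk unfolding rkhs_def by blast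
lemma add_in: "u \<in> H \<Longrightarrow> v \<in> H \<Longrightarrow> (\<lambda>x. u x + v x) \<in> H" using rk unfolding rkhs_def by blast
lemma scal_in: "u \<in> H \<Longrightarrow> (\<lambda>x. a * u x) \<in> H" using rk unfolding rkhs_def by blast
lemma lc_in: "u \<in> H \<Longrightarrow> v \<in> H \<Longrightarrow> (\<lambda>x. a * u x + v x) \<in> H"
  using add_in[OF scal_in[of u a] ] by auto
lemma diff_in: "u \<in> H \<Longrightarrow> v \<in> H \<Longrightarrow> (\<lambda>x. u x - v x) \<in> H"
proof -
  assume "u \<in> H" "v \<in> H"
  have "(\<lambda>x. u x - v x) = (\<lambda>x. (-1) * v x + u x)" by auto
  thus ?thesis using lc_in[OF \<open>v\<in>H\<close> \<open>u\<in>H\<close>, where a="-1"] by metis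
qed
lemma ip_lin: "u \<in> H \<Longrightarrow> v \<in> H \<Longrightarrow> w \<in> H \<Longrightarrow> ip (\<lambda>x. a * u x + v x) w = a * ip u w + ip v w"
  using rk unfolding rkhs_def by blast
lemma ip_sym: "u \<in> H \<Longrightarrow> v \<in> H \<Longrightarrow> ip u v = cnj (ip v u)"
  using rk unfolding rkhs_def by blast
lemma ip_pos: "u \<in> H \<Longrightarrow> Im (ip u u) = 0 \<and> Re (ip u u) \<ge> 0"
  using rk unfolding rkhs_def by blast
lemma ip_def0: "u \<in> H \<Longrightarrow> ip u u = 0 \<Longrightarrow> u = (\<lambda>x. 0)"
  using rk unfolding rkhs_def by blast
lemma complete: "(\<And>n. u n \<in> H) \<Longrightarrow> (\<And>e. e>0 \<Longrightarrow> \<exists>N. \<forall>m\<ge>N. \<forall>n\<ge>N. nm (\<lambda>x. u m x - u n x) < e)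
   \<Longrightarrow> \<exists>g\<in>H. (\<lambda>n. nm (\<lambda>x. u n x - g x)) \<longlonglongrightarrow> 0"
  using rk unfolding rkhs_def by blast
lemma repr: "\<exists>k\<in>H. \<forall>f\<in>H. f y = ip f k"
  using rk unfolding rkhs_def by blast

lemma ip_zero_left: "w \<in> H \<Longrightarrow> ip (\<lambda>x. 0) w = 0"
  using ip_lin[OF zero_in zero_in, of w 1] by simp
lemma ip_scal_left: "u \<in> H \<Longrightarrow> w \<in> H \<Longrightarrow> ip (\<lambda>x. a * u x) w = a * ip u w"
  using ip_lin[OF _ zero_in, of u w a] ip_zero_left by simp
lemma ip_add_left: "u \<in> H \<Longrightarrow> v \<in> H \<Longrightarrow> w \<in> H \<Longrightarrow> ip (\<lambda>x. u x + v x) w = ip u w + ip v w"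
  using ip_lin[of u v w 1] by simp
lemma ip_diff_left: "u \<in> H \<Longrightarrow> v \<in> H \<Longrightarrow> w \<in> H \<Longrightarrow> ip (\<lambda>x. u x - v x) w = ip u w - ip v w"
proof -
  assume a: "u \<in> H" "v \<in> H" "w \<in> H"
  have "(\<lambda>x. u x - v x) = (\<lambda>x. (-1) * v x + u x)" by auto
  thus ?thesis using ip_lin[OF a(2) a(1) a(3), of "-1"] by simp
qed
lemma ip_lin_right: "u \<in> H \<Longrightarrow> v \<in> H \<Longrightarrow> w \<in> H \<Longrightarrow> ip w (\<lambda>x. a * u x + v x) = cnj a * ip w u + ip w v"
  by (simp add: ip_sym[of w] ip_sym[of w u] ip_sym[of w v] lc_in ip_lin)
lemma ip_zero_right: "w \<in> H \<Longrightarrow> ip w (\<lambda>x. 0) = 0"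
  by (simp add: ip_sym[of w] zero_in ip_zero_left)
lemma ip_scal_right: "u \<in> H \<Longrightarrow> w \<in> H \<Longrightarrow> ip w (\<lambda>x. a * u x) = cnj a * ip w u"
  by (simp add: ip_sym[of w] ip_sym[of w u] scal_in ip_scal_left)
lemma ip_add_right: "u \<in> H \<Longrightarrow> v \<in> H \<Longrightarrow> w \<in> H \<Longrightarrow> ip w (\<lambda>x. u x + v x) = ip w u + ip w v"
  by (simp add: ip_sym[of w] ip_sym[of w u] ip_sym[of w v] add_in ip_add_left)
lemma ip_diff_right: "u \<in> H \<Longrightarrow> v \<in> H \<Longrightarrow> w \<in> H \<Longrightarrow> ip w (\<lambda>x. u x - v x) = ip w u - ip w v"
  by (simp add: ip_sym[of w] ip_sym[of w u] ip_sym[of w v] diff_in ip_diff_left)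

lemma nm_nonneg: "u \<in> H \<Longrightarrow> nm u \<ge> 0"
  using ip_pos[of u] by (simp add: hnorm_def)
lemma nm_sq: "u \<in> H \<Longrightarrow> (nm u)^2 = Re (ip u u)"
  using ip_pos[of u] by (simp add: hnorm_def)
lemma ip_self: "u \<in> H \<Longrightarrow> ip u u = complex_of_real ((nm u)^2)"
  using ip_pos[of u] nm_sq[of u] by (simp add: complex_eq_iff)
lemma nm_zero: "u \<in> H \<Longrightarrow> nm u = 0 \<Longrightarrow> u = (\<lambda>x. 0)"
  using ip_self[of u] ip_def0[of u] by simp

lemma expand: assumes u: "u \<in> H" and w: "w \<in> H"
  shows "(nm (\<lambda>x. u x - t * w x))^2 = (nm u)^2 - 2 * Re (cnj t * ip u w) + (cmod t)^2 * (nm w)^2"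
proof -
  define z where "z = (\<lambda>x. (-t) * w x + u x)"
  have ze: "(\<lambda>x. u x - t * w x) = z" unfolding z_def by auto
  have zH: "z \<in> H" unfolding z_def using lc_in[OF w u] .
  have "ip (\<lambda>x. (-t) * w x + u x) z = (-t) * ip w z + ip u z" by (rule ip_lin[OF w u zH])
  hence "ip z z = (-t) * ip w z + ip u z" unfolding z_def[symmetric] .
  also have "ip w z = cnj (-t) * ip w w + ip w u" unfolding z_def using ip_lin_right[OF w u w] .
  also have "ip u z = cnj (-t) * ip u w + ip u u" unfolding z_def using ip_lin_right[OF w u u] .
  finally have e: "ip z z = t * cnj t * ip w w - t * ip w u - cnj t * ip u w + ip u u"
    by (simp add: algebra_simps)
  have e2: "t * cnj t = complex_of_real ((cmod t)^2)" by (rule complex_norm_square[symmetric])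
  have e3: "Re (t * ip w u) = Re (cnj t * ip u w)" using ip_sym[OF w u] by simp
  have "(nm z)^2 = Re (ip z z)" using nm_sq[OF zH] .
  also have "\<dots> = (cmod t)^2 * (nm w)^2 - Re (t * ip w u) - Re (cnj t * ip u w) + (nm u)^2"
    unfolding e e2 using ip_self[OF w] ip_self[OF u] by simp
  finally show ?thesis unfolding ze using e3 by simp
qed

lemma cs: assumes u: "u \<in> H" and w: "w \<in> H" shows "cmod (ip u w) \<le> nm u * nm w"
proof -
  define \<beta> where "\<beta> = ip u w"
  have "\<forall>s. 0 \<le> (nm u)^2 - 2*s*(cmod \<beta>)^2 + s^2*(cmod \<beta>)^2*(nm w)^2"
  proof
    fix s :: real
    have e1: "Re (cnj (of_real s * \<beta>) * \<beta>) = s*(cmod \<beta>)^2"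
      using cmod_power2[of \<beta>] by (simp add: power2_eq_square algebra_simps)
    have e2: "(cmod (of_real s * \<beta>))^2 = s^2 * (cmod \<beta>)^2" by (simp add: norm_mult power_mult_distrib)
    have "(nm (\<lambda>x. u x - (of_real s * \<beta>) * w x))^2 = (nm u)^2 - 2*s*(cmod \<beta>)^2 + s^2*(cmod \<beta>)^2*(nm w)^2"
      using expand[OF u w, of "of_real s * \<beta>"] unfolding \<beta>_def[symmetric] e1 e2 by simp
    thus "0 \<le> (nm u)^2 - 2*s*(cmod \<beta>)^2 + s^2*(cmod \<beta>)^2*(nm w)^2" by (metis zero_le_power2)
  qed
  from quad[OF this] have "(cmod \<beta>)^2 \<le> (nm u * nm w)^2" by (simp add: power_mult_distrib)
  thus ?thesis unfolding \<beta>_def using nm_nonneg[OF u] nm_nonneg[OF w]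
    by (meson mult_nonneg_nonneg power2_le_imp_le)
qed

lemma expand_diff: assumes u: "u \<in> H" and w: "w \<in> H"
  shows "(nm (\<lambda>x. u x - w x))^2 = (nm u)^2 - 2 * Re (ip u w) + (nm w)^2"
  using expand[OF u w, of 1] by simp

lemma expand_add: assumes u: "u \<in> H" and w: "w \<in> H"
  shows "(nm (\<lambda>x. u x + w x))^2 = (nm u)^2 + 2 * Re (ip u w) + (nm w)^2"
  using expand[OF u w, of "-1"] by simp

lemma nm_scal: assumes u: "u \<in> H" shows "nm (\<lambda>x. a * u x) = cmod a * nm u"
proof -
  have "(nm (\<lambda>x. 0 - (-a) * u x))^2 = (cmod a * nm u)^2"
    using expand[OF zero_in u, of "-a"] ip_zero_left[OF u] ip_zero_left[OF zero_in] by (simp add: hnorm_def power_mult_distrib)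
  hence "(nm (\<lambda>x. a * u x))^2 = (cmod a * nm u)^2" by simp
  thus ?thesis using nm_nonneg[OF scal_in[OF u]] nm_nonneg[OF u]
    by (simp add: power2_eq_iff_nonneg)
qed

lemma nm_sym: assumes u: "u \<in> H" and v: "v \<in> H" shows "nm (\<lambda>x. u x - v x) = nm (\<lambda>x. v x - u x)"
proof -
  have "(\<lambda>x. u x - v x) = (\<lambda>x. (-1) * (v x - u x))" by auto
  thus ?thesis using nm_scal[OF diff_in[OF v u], of "-1"] by simp
qed

lemma tri: assumes u: "u \<in> H" and w: "w \<in> H" shows "nm (\<lambda>x. u x + w x) \<le> nm u + nm w"
proof -
  have "(nm (\<lambda>x. u x + w x))^2 \<le> (nm u + nm w)^2"
    unfolding expand_add[OF u w] using cs[OF u w] complex_Re_le_cmod[of "ip u w"]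
    by (simp add: power2_sum)
  thus ?thesis using nm_nonneg[OF u] nm_nonneg[OF w] by (meson add_nonneg_nonneg power2_le_imp_le)
qed

lemma tri_diff: assumes u: "u \<in> H" and v: "v \<in> H" and w: "w \<in> H"
  shows "nm (\<lambda>x. u x - w x) \<le> nm (\<lambda>x. u x - v x) + nm (\<lambda>x. v x - w x)"
proof -
  have "(\<lambda>x. u x - w x) = (\<lambda>x. (u x - v x) + (v x - w x))" by auto
  thus ?thesis using tri[OF diff_in[OF u v] diff_in[OF v w]] by simp
qed

lemma eval_bound: assumes u: "u \<in> H" shows "\<exists>C\<ge>0. \<forall>u\<in>H. cmod (u y) \<le> C * nm u"
proof -
  obtain k where k: "k \<in> H" "\<forall>f\<in>H. f y = ip f k" using repr by blast
  show ?thesis using cs[OF _ k(1)] k(2) nm_nonneg[OF k(1)]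
    by (metis mult.commute)
qed

lemma expand_s: assumes u: "u \<in> H" and w: "w \<in> H"
  shows "(nm (\<lambda>x. u x - (of_real s * ip u w) * w x))^2 = (nm u)^2 - 2*s*(cmod (ip u w))^2 + s^2*(cmod (ip u w))^2*(nm w)^2"
proof -
  define \<beta> where "\<beta> = ip u w"
  have e1: "Re (cnj (of_real s * \<beta>) * \<beta>) = s*(cmod \<beta>)^2"
    using cmod_power2[of \<beta>] by (simp add: power2_eq_square algebra_simps)
  have e2: "(cmod (of_real s * \<beta>))^2 = s^2 * (cmod \<beta>)^2" by (simp add: norm_mult power_mult_distrib)
  show ?thesis
    using expand[OF u w, of "of_real s * \<beta>"] unfolding \<beta>_def[symmetric] e1 e2 by simp
qed

lemma proj:
  assumes KH: "K \<subseteq> H" and K0: "(\<lambda>x. 0) \<in> K"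
    and Klc: "\<And>a u v. u \<in> K \<Longrightarrow> v \<in> K \<Longrightarrow> (\<lambda>x. a * u x + v x) \<in> K"
    and Kcl: "\<And>u g. (\<And>n. u n \<in> K) \<Longrightarrow> g \<in> H \<Longrightarrow> (\<lambda>n. nm (\<lambda>x. u n x - g x)) \<longlonglongrightarrow> 0 \<Longrightarrow> g \<in> K"
    and w: "w \<in> H"
  shows "\<exists>p\<in>K. \<forall>k\<in>K. ip (\<lambda>x. w x - p x) k = 0"
proof -
  have Ksc: "(\<lambda>x. a * u x) \<in> K" if "u \<in> K" for a u using Klc[OF that K0, of a] by simp
  define S where "S = (\<lambda>k. nm (\<lambda>x. w x - k x)) ` K"
  define d where "d = Inf S"
  have Sne: "S \<noteq> {}" using K0 unfolding S_def by blast
  have Snn: "\<forall>x\<in>S. 0 \<le> x" unfolding S_def using KH w by (auto intro!: nm_nonneg diff_in)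
  hence bdd: "bdd_below S" by (meson bdd_below_def)
  have dle: "d \<le> nm (\<lambda>x. w x - k x)" if "k \<in> K" for k
    unfolding d_def using cInf_lower[OF _ bdd] that unfolding S_def by blast
  have d0: "0 \<le> d" unfolding d_def using cInf_greatest[OF Sne] Snn by blast
  define e :: "nat \<Rightarrow> real" where "e n = 1 / real (Suc n)" for n
  have epos: "e n > 0" for n unfolding e_def by simp
  have emono: "e m \<le> e n" if "n \<le> m" for m n unfolding e_def using that by (simp add: frac_le)
  have ele1: "e n \<le> 1" for n unfolding e_def by simp
  have "\<forall>n. \<exists>k\<in>K. nm (\<lambda>x. w x - k x) < d + e n"
  proof
    fix n
    have "Inf S < d + e n" unfolding d_def using epos[of n] by simp
    from cInf_lessD[OF Sne this] show "\<exists>k\<in>K. nm (\<lambda>x. w x - k x) < d + e n" unfolding S_def by blast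
  qed
  then obtain kk where kk: "\<And>n. kk n \<in> K" "\<And>n. nm (\<lambda>x. w x - kk n x) < d + e n"
    by metis

  have kH: "kk n \<in> H" for n using kk(1) KH by blast
  have bnd: "(nm (\<lambda>x. kk m x - kk n x))^2 \<le> 2*(d + e m)^2 + 2*(d + e n)^2 - 4*d^2" for m n
  proof -
    define a where "a = (\<lambda>x. w x - kk m x)"
    define b where "b = (\<lambda>x. w x - kk n x)"
    have aH: "a \<in> H" unfolding a_def by (rule diff_in[OF w kH])
    have bH: "b \<in> H" unfolding b_def by (rule diff_in[OF w kH])
    define mid where "mid = (\<lambda>x. (1/2) * kk m x + ((1/2) * kk n x))"
    have midK: "mid \<in> K" unfolding mid_def by (rule Klc[OF kk(1) Ksc[OF kk(1)]])
    have e1: "(\<lambda>x. a x - b x) = (\<lambda>x. kk n x - kk m x)" unfolding a_def b_def by auto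
    have e2: "(\<lambda>x. a x + b x) = (\<lambda>x. 2 * (w x - mid x))" unfolding a_def b_def mid_def
      by (auto simp: algebra_simps)
    have par: "(nm (\<lambda>x. a x - b x))^2 + (nm (\<lambda>x. a x + b x))^2 = 2*(nm a)^2 + 2*(nm b)^2"
      using expand_diff[OF aH bH] expand_add[OF aH bH] by simp
    have "nm (\<lambda>x. a x + b x) = 2 * nm (\<lambda>x. w x - mid x)"
      unfolding e2 using nm_scal[OF diff_in[OF w], of mid 2] midK KH by auto
    hence "nm (\<lambda>x. a x + b x) \<ge> 2 * d" using dle[OF midK] by simp
    hence "(nm (\<lambda>x. a x + b x))^2 \<ge> (2*d)^2" by (rule power_mono) (use d0 in simp)
    moreover have "(nm a)^2 \<le> (d + e m)^2" using kk(2)[of m] nm_nonneg[OF aH] unfolding a_def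
      by (simp add: power_mono)
    moreover have "(nm b)^2 \<le> (d + e n)^2" using kk(2)[of n] nm_nonneg[OF bH] unfolding b_def
      by (simp add: power_mono)
    ultimately have "(nm (\<lambda>x. a x - b x))^2 \<le> 2*(d + e m)^2 + 2*(d + e n)^2 - 4*d^2"
      using par by (simp add: power_mult_distrib)
    thus ?thesis unfolding e1 using nm_sym[OF kH kH, of n m] by simp
  qed
  have cauchy: "\<exists>N. \<forall>m\<ge>N. \<forall>n\<ge>N. nm (\<lambda>x. kk m x - kk n x) < \<epsilon>" if "\<epsilon> > 0" for \<epsilon>
  proof -
    have "\<epsilon>^2 / (8*d+4) > 0" using that d0 by simp
    then obtain N where N: "inverse (real (Suc N)) < \<epsilon>^2 / (8*d+4)" using reals_Archimedean by blast
    hence eN: "e N * (8*d+4) < \<epsilon>^2" unfolding e_def using d0 by (simp add: field_simps)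
    show ?thesis
    proof (intro exI allI impI)
      fix m n assume mn: "N \<le> m" "N \<le> n"
      have em: "e m \<le> e N" "e n \<le> e N" using emono mn by auto
      have "2*(d + e m)^2 + 2*(d + e n)^2 - 4*d^2 = 4*d*(e m + e n) + 2*(e m)^2 + 2*(e n)^2"
        by (simp add: power2_eq_square algebra_simps)
      also have "\<dots> \<le> 4*d*(2*e N) + 2*e N + 2 * e N"
      proof -
        have "(e m)^2 \<le> e N" using em(1) ele1[of m] epos[of m] by (simp add: power2_eq_square mult_le_one order_trans[OF mult_right_le_one_le])
        moreover have "(e n)^2 \<le> e N" using em(2) ele1[of n] epos[of n] by (simp add: power2_eq_square order_trans[OF mult_right_le_one_le])
        moreover have "4*d*(e m + e n) \<le> 4*d*(2*e N)" using em d0 by (intro mult_left_mono) auto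
        ultimately show ?thesis by linarith
      qed
      also have "\<dots> = e N * (8*d+4)" by (simp add: algebra_simps)
      finally have "(nm (\<lambda>x. kk m x - kk n x))^2 < \<epsilon>^2" using bnd[of m n] eN by linarith
      thus "nm (\<lambda>x. kk m x - kk n x) < \<epsilon>" using that by (meson abs_less_iff less_le_trans power2_less_imp_less abs_ge_self order_less_imp_le)
    qed
  qed
  obtain p where pH: "p \<in> H" and plim: "(\<lambda>n. nm (\<lambda>x. kk n x - p x)) \<longlonglongrightarrow> 0"
    using complete[OF kH cauchy] by blast
  have pK: "p \<in> K" by (rule Kcl[OF kk(1) pH plim])
  have pd: "nm (\<lambda>x. w x - p x) \<le> d"
  proof (rule field_le_epsilon)
    fix \<epsilon> :: real assume ep: "\<epsilon> > 0"
    obtain N1 where N1: "\<forall>n\<ge>N1. norm (nm (\<lambda>x. kk n x - p x) - 0) < \<epsilon>/2"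
      using plim ep unfolding LIMSEQ_iff by (meson half_gt_zero)
    obtain N2 where N2: "inverse (real (Suc N2)) < \<epsilon>/2" using reals_Archimedean ep by (meson half_gt_zero)
    define n where "n = max N1 N2"
    have "e n \<le> e N2" unfolding n_def by (rule emono) simp
    moreover have "e N2 < \<epsilon>/2" using N2 unfolding e_def by (simp add: inverse_eq_divide)
    ultimately have en: "e n < \<epsilon>/2" by linarith
    have "norm (nm (\<lambda>x. kk n x - p x) - 0) < \<epsilon>/2" using N1 unfolding n_def by simp
    hence "nm (\<lambda>x. kk n x - p x) < \<epsilon>/2" by simp
    moreover have "nm (\<lambda>x. w x - p x) \<le> nm (\<lambda>x. w x - kk n x) + nm (\<lambda>x. kk n x - p x)"
      by (rule tri_diff[OF w kH pH])
    ultimately show "nm (\<lambda>x. w x - p x) \<le> d + \<epsilon>" using kk(2)[of n] en by linarith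
  qed
  define z where "z = (\<lambda>x. w x - p x)"
  have zH: "z \<in> H" unfolding z_def by (rule diff_in[OF w pH])
  show ?thesis
  proof (intro bexI[OF _ pK] ballI)
    fix k assume kK: "k \<in> K"
    have kH': "k \<in> H" using kK KH by blast
    define \<beta> where "\<beta> = ip z k"
    have "\<forall>s. 0 \<le> 0 - 2*s*(cmod \<beta>)^2 + s^2*(cmod \<beta>)^2*(nm k)^2"
    proof
      fix s :: real
      define q where "q = (\<lambda>x. (of_real s * \<beta>) * k x + p x)"
      have qK: "q \<in> K" unfolding q_def by (rule Klc[OF kK pK])
      have "(\<lambda>x. w x - q x) = (\<lambda>x. z x - (of_real s * ip z k) * k x)" unfolding q_def z_def \<beta>_def by auto
      hence "(nm (\<lambda>x. w x - q x))^2 = (nm z)^2 - 2*s*(cmod \<beta>)^2 + s^2*(cmod \<beta>)^2*(nm k)^2"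
        using expand_s[OF zH kH'] unfolding \<beta>_def by simp
      moreover have "nm z \<le> nm (\<lambda>x. w x - q x)" using pd dle[OF qK] unfolding z_def by linarith
      hence "(nm z)^2 \<le> (nm (\<lambda>x. w x - q x))^2" using nm_nonneg[OF zH] by (simp add: power_mono)
      ultimately show "0 \<le> 0 - 2*s*(cmod \<beta>)^2 + s^2*(cmod \<beta>)^2*(nm k)^2" by linarith
    qed
    from quad[OF this] have "(cmod \<beta>)^2 \<le> 0" by simp
    thus "ip (\<lambda>x. w x - p x) k = 0" unfolding \<beta>_def z_def by simp
  qed
qed

lemma mult_in: "multiplier H ip \<psi> \<Longrightarrow> u \<in> H \<Longrightarrow> mult \<psi> u \<in> H"
  unfolding multiplier_def by blast
lemma mult_bound: assumes "multiplier H ip \<psi>" shows "\<exists>C\<ge>0. \<forall>u\<in>H. nm (mult \<psi> u) \<le> C * nm u"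
proof -
  obtain C where C: "\<forall>u\<in>H. nm (mult \<psi> u) \<le> C * nm u" using assms unfolding multiplier_def by blast
  have "\<forall>u\<in>H. nm (mult \<psi> u) \<le> max C 0 * nm u"
  proof
    fix u assume u: "u \<in> H"
    have "C * nm u \<le> max C 0 * nm u" using nm_nonneg[OF u] by (simp add: mult_right_mono)
    thus "nm (mult \<psi> u) \<le> max C 0 * nm u" using C u by force
  qed
  thus ?thesis by (intro exI[of _ "max C 0"]) auto
qed

lemma adj_ex: assumes psi: "multiplier H ip \<psi>" and h: "h \<in> H"
  shows "\<exists>g\<in>H. \<forall>u\<in>H. ip (mult \<psi> u) h = ip u g"
proof -
  define L where "L u = ip (mult \<psi> u) h" for u
  obtain C where C: "C \<ge> 0" "\<forall>u\<in>H. nm (mult \<psi> u) \<le> C * nm u" using mult_bound[OF psi] by blast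
  have Llin: "L (\<lambda>x. a * u x + v x) = a * L u + L v" if "u \<in> H" "v \<in> H" for a u v
    unfolding L_def mult_lin using ip_lin[OF mult_in[OF psi that(1)] mult_in[OF psi that(2)] h] .
  have Ldiff: "L (\<lambda>x. u x - v x) = L u - L v" if "u \<in> H" "v \<in> H" for u v
    unfolding L_def mult_diff using ip_diff_left[OF mult_in[OF psi that(1)] mult_in[OF psi that(2)] h] .
  have Lb: "cmod (L u) \<le> C * nm h * nm u" if "u \<in> H" for u
  proof -
    have "cmod (L u) \<le> nm (mult \<psi> u) * nm h" unfolding L_def by (rule cs[OF mult_in[OF psi that] h])
    also have "\<dots> \<le> C * nm u * nm h" using C that nm_nonneg[OF h] by (simp add: mult_right_mono)
    finally show ?thesis by (simp add: algebra_simps)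
  qed
  define K where "K = {u \<in> H. L u = 0}"
  have KH: "K \<subseteq> H" unfolding K_def by blast
  have L0: "L (\<lambda>x. 0) = 0" unfolding L_def mult_zero using ip_zero_left[OF h] .
  have K0: "(\<lambda>x. 0) \<in> K" unfolding K_def using zero_in L0 by blast
  have Klc: "(\<lambda>x. a * u x + v x) \<in> K" if "u \<in> K" "v \<in> K" for a u v
    using that Llin lc_in unfolding K_def by auto
  have Kcl: "g \<in> K" if un: "\<And>n. u n \<in> K" and g: "g \<in> H" and lim: "(\<lambda>n. nm (\<lambda>x. u n x - g x)) \<longlonglongrightarrow> 0" for u g
  proof -
    have uH: "u n \<in> H" for n using un KH by blast
    have "(\<lambda>n. C * nm h * nm (\<lambda>x. u n x - g x)) \<longlonglongrightarrow> C * nm h * 0" by (rule tendsto_mult_left[OF lim])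
    moreover have "cmod (L g) \<le> C * nm h * nm (\<lambda>x. u n x - g x)" for n
    proof -
      have "L g = L g - L (u n)" using un[of n] unfolding K_def by simp
      also have "\<dots> = L (\<lambda>x. g x - u n x)" using Ldiff[OF g uH] by simp
      finally have "cmod (L g) \<le> C * nm h * nm (\<lambda>x. g x - u n x)" using Lb[OF diff_in[OF g uH]] by simp
      thus ?thesis using nm_sym[OF g uH] by simp
    qed
    ultimately have "cmod (L g) \<le> 0" using LIMSEQ_le_const by fastforce
    thus ?thesis unfolding K_def using g by simp
  qed
  show ?thesis
  proof (cases "\<forall>u\<in>H. L u = 0")
    case True
    thus ?thesis using zero_in ip_zero_right unfolding L_def by auto
  next
    case False
    then obtain u0 where u0: "u0 \<in> H" "L u0 \<noteq> 0" by blast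
    have "\<exists>p\<in>K. \<forall>k\<in>K. ip (\<lambda>x. u0 x - p x) k = 0"
      by (rule proj[OF KH K0 Klc Kcl u0(1)])
    then obtain p where pK: "p \<in> K" and orth: "\<forall>k\<in>K. ip (\<lambda>x. u0 x - p x) k = 0"
      by (elim bexE)
    define z where "z = (\<lambda>x. u0 x - p x)"
    have pH: "p \<in> H" using pK KH by blast
    have zH: "z \<in> H" unfolding z_def by (rule diff_in[OF u0(1) pH])
    have Lz: "L z = L u0" unfolding z_def using Ldiff[OF u0(1) pH] pK unfolding K_def by simp
    have zz: "ip z z \<noteq> 0"
    proof
      assume "ip z z = 0"
      hence "z = (\<lambda>x. 0)" using ip_def0[OF zH] by simp
      hence "L z = 0" using L0 by simp
      thus False using Lz u0(2) by simp
    qed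
    define g where "g = (\<lambda>x. (cnj (L z) / cnj (ip z z)) * z x)"
    have gH: "g \<in> H" unfolding g_def by (rule scal_in[OF zH])
    show ?thesis
    proof (intro bexI[OF _ gH] ballI)
      fix u assume uH: "u \<in> H"
      define c where "c = L u / L z"
      define v where "v = (\<lambda>x. (-c) * z x + u x)"
      have vH: "v \<in> H" unfolding v_def by (rule lc_in[OF zH uH])
      have "L v = (-c) * L z + L u" unfolding v_def by (rule Llin[OF zH uH])
      also have "\<dots> = 0" using Lz u0(2) unfolding c_def by simp
      finally have vK: "v \<in> K" unfolding K_def using vH by simp
      have "ip z v = 0" using orth vK unfolding z_def by blast
      moreover have "ip v z = cnj (ip z v)" by (rule ip_sym[OF vH zH])
      moreover have "ip v z = (-c) * ip z z + ip u z" unfolding v_def by (rule ip_lin[OF zH uH zH])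
      ultimately have "(-c) * ip z z + ip u z = 0" by simp
      hence iuz: "ip u z = c * ip z z" by (simp add: algebra_simps)
      have "ip u g = cnj (cnj (L z) / cnj (ip z z)) * ip u z" unfolding g_def by (rule ip_scal_right[OF zH uH])
      also have "\<dots> = (L z / ip z z) * ip u z" by simp
      also have "\<dots> = L u" unfolding iuz c_def using zz Lz u0(2) by simp
      finally show "ip (mult \<psi> u) h = ip u g" unfolding L_def by simp
    qed
  qed
qed

lemma adj: assumes psi: "multiplier H ip \<psi>" and h: "h \<in> H"
  shows "mult_adj H ip \<psi> h \<in> H \<and> (\<forall>u\<in>H. ip (mult \<psi> u) h = ip u (mult_adj H ip \<psi> h))"
proof -
  have uniq: "g1 = g2" if "g1 \<in> H \<and> (\<forall>u\<in>H. ip (mult \<psi> u) h = ip u g1)" "g2 \<in> H \<and> (\<forall>u\<in>H. ip (mult \<psi> u) h = ip u g2)" for g1 g2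
  proof -
    have g: "g1 \<in> H" "g2 \<in> H" using that by auto
    define d where "d = (\<lambda>x. g1 x - g2 x)"
    have dH: "d \<in> H" unfolding d_def by (rule diff_in[OF g])
    have "ip d d = ip d g1 - ip d g2" unfolding d_def[of] by (rule ip_diff_right[OF g dH[unfolded d_def]])
    also have "\<dots> = 0" using that dH by simp
    finally have "d = (\<lambda>x. 0)" using ip_def0[OF dH] by simp
    thus ?thesis unfolding d_def by (simp add: fun_eq_iff)
  qed
  have "\<exists>!g. g \<in> H \<and> (\<forall>u\<in>H. ip (mult \<psi> u) h = ip u g)"
    using adj_ex[OF psi h] uniq by blast
  from theI'[OF this] show ?thesis unfolding mult_adj_def .
qed

lemma adj_in: "multiplier H ip \<psi> \<Longrightarrow> h \<in> H \<Longrightarrow> mult_adj H ip \<psi> h \<in> H"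
  using adj by blast
lemma adj_eq: "multiplier H ip \<psi> \<Longrightarrow> h \<in> H \<Longrightarrow> u \<in> H \<Longrightarrow> ip (mult \<psi> u) h = ip u (mult_adj H ip \<psi> h)"
  using adj by blast

lemma adj_unique: assumes psi: "multiplier H ip \<psi>" and h: "h \<in> H" and g: "g \<in> H"
  and eq: "\<And>u. u \<in> H \<Longrightarrow> ip (mult \<psi> u) h = ip u g"
  shows "mult_adj H ip \<psi> h = g"
proof -
  define a where "a = mult_adj H ip \<psi> h"
  have aH: "a \<in> H" unfolding a_def by (rule adj_in[OF psi h])
  define d where "d = (\<lambda>x. a x - g x)"
  have dH: "d \<in> H" unfolding d_def by (rule diff_in[OF aH g])
  have "ip d d = ip d a - ip d g" unfolding d_def[of] by (rule ip_diff_right[OF aH g dH[unfolded d_def]])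
  moreover have "ip d a = ip d g" unfolding a_def using adj_eq[OF psi h dH] eq[OF dH] by (rule trans[OF sym])
  ultimately have "ip d d = 0" by simp
  hence "d = (\<lambda>x. 0)" by (rule ip_def0[OF dH])
  thus ?thesis unfolding d_def a_def by (simp add: fun_eq_iff)
qed

lemma ball_mult: "mult_ball H ip \<psi> \<Longrightarrow> multiplier H ip \<psi>" unfolding mult_ball_def by blast
lemma ball_bound: "mult_ball H ip \<psi> \<Longrightarrow> u \<in> H \<Longrightarrow> nm (mult \<psi> u) \<le> nm u" unfolding mult_ball_def by blast

lemma ball_one: "mult_ball H ip (\<lambda>x. 1)"
  unfolding mult_ball_def multiplier_def mult_one by (auto intro: exI[of _ 1])

lemma ball_prod: assumes a: "mult_ball H ip a" and b: "mult_ball H ip b"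
  shows "mult_ball H ip (\<lambda>x. a x * b x)"
proof -
  have in1: "mult (\<lambda>x. a x * b x) f \<in> H" if "f \<in> H" for f
    unfolding mult_mult[symmetric] using mult_in[OF ball_mult[OF a] mult_in[OF ball_mult[OF b] that]] .
  have bd: "nm (mult (\<lambda>x. a x * b x) f) \<le> nm f" if "f \<in> H" for f
    unfolding mult_mult[symmetric]
    using ball_bound[OF a mult_in[OF ball_mult[OF b] that]] ball_bound[OF b that] by linarith
  show ?thesis unfolding mult_ball_def multiplier_def using in1 bd by (auto intro: exI[of _ 1])
qed

lemma adj_contr: assumes psi: "mult_ball H ip \<psi>" and v: "v \<in> H"
  shows "nm (mult_adj H ip \<psi> v) \<le> nm v"
proof -
  define g where "g = mult_adj H ip \<psi> v"
  have gH: "g \<in> H" unfolding g_def by (rule adj_in[OF ball_mult[OF psi] v])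
  have "(nm g)^2 = Re (ip g g)" by (rule nm_sq[OF gH])
  also have "ip g g = ip (mult \<psi> g) v" unfolding g_def by (rule adj_eq[OF ball_mult[OF psi] v gH, symmetric, unfolded g_def])
  also have "Re (ip (mult \<psi> g) v) \<le> cmod (ip (mult \<psi> g) v)" by (rule complex_Re_le_cmod)
  also have "\<dots> \<le> nm (mult \<psi> g) * nm v" by (rule cs[OF mult_in[OF ball_mult[OF psi] gH] v])
  also have "\<dots> \<le> nm g * nm v" using ball_bound[OF psi gH] nm_nonneg[OF v] by (rule mult_right_mono)
  finally have "(nm g)^2 \<le> nm g * nm v" .
  hence "nm g \<le> nm v" using nm_nonneg[OF gH] nm_nonneg[OF v]
    by (metis mult_le_cancel_left_pos power2_eq_square order_le_less)
  thus ?thesis unfolding g_def .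
qed

lemma qop_bound: assumes psi: "mult_ball H ip \<psi>" and v: "v \<in> H"
  shows "(nm (Qop H ip \<psi> v))^2 \<le> (nm v)^2 - (nm (mult_adj H ip \<psi> v))^2"
proof -
  define w where "w = mult_adj H ip \<psi> v"
  have wH: "w \<in> H" unfolding w_def by (rule adj_in[OF ball_mult[OF psi] v])
  have pwH: "mult \<psi> w \<in> H" by (rule mult_in[OF ball_mult[OF psi] wH])
  have "(nm (Qop H ip \<psi> v))^2 = (nm v)^2 - 2 * Re (ip v (mult \<psi> w)) + (nm (mult \<psi> w))^2"
    unfolding Qop_def w_def[symmetric] by (rule expand_diff[OF v pwH])
  also have "ip v (mult \<psi> w) = cnj (ip (mult \<psi> w) v)" by (rule ip_sym[OF v pwH])
  also have "ip (mult \<psi> w) v = ip w w" unfolding w_def by (rule adj_eq[OF ball_mult[OF psi] v wH[unfolded w_def]])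
  also have "Re (cnj (ip w w)) = (nm w)^2" using nm_sq[OF wH] by simp
  finally have e: "(nm (Qop H ip \<psi> v))^2 = (nm v)^2 - 2 * (nm w)^2 + (nm (mult \<psi> w))^2" .
  have "(nm (mult \<psi> w))^2 \<le> (nm w)^2" using ball_bound[OF psi wH] nm_nonneg[OF pwH] by (simp add: power_mono)
  thus ?thesis unfolding e w_def by simp
qed

lemma weak:
  assumes Psi: "\<And>N. mult_ball H ip (\<Psi> N)" and Phi: "multiplier H ip \<Phi>"
    and pt: "\<And>x. (\<lambda>N. \<Psi> N x) \<longlonglongrightarrow> \<Phi> x" and u: "u \<in> H" and w: "w \<in> H"
  shows "(\<lambda>N. ip (mult (\<Psi> N) u) w) \<longlonglongrightarrow> ip (mult \<Phi> u) w"
proof -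
  define X where "X N = mult (\<Psi> N) u" for N
  define Y where "Y = mult \<Phi> u"
  have XH: "X N \<in> H" for N unfolding X_def by (rule mult_in[OF ball_mult[OF Psi] u])
  have YH: "Y \<in> H" unfolding Y_def by (rule mult_in[OF Phi u])
  have Xb: "nm (X N) \<le> nm u" for N unfolding X_def by (rule ball_bound[OF Psi u])
  define D where "D = {w \<in> H. (\<lambda>N. ip (X N) w) \<longlonglongrightarrow> ip Y w}"
  have DH: "D \<subseteq> H" unfolding D_def by blast
  have D0: "(\<lambda>x. 0) \<in> D"
  proof -
    have "(\<lambda>N. ip (X N) (\<lambda>x. 0)) = (\<lambda>N. 0)" using ip_zero_right[OF XH] by simp
    moreover have "ip Y (\<lambda>x. 0) = 0" by (rule ip_zero_right[OF YH])
    ultimately show ?thesis unfolding D_def using zero_in by simp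
  qed
  have Dlc: "(\<lambda>x. a * w1 x + w2 x) \<in> D" if "w1 \<in> D" "w2 \<in> D" for a w1 w2
  proof -
    have w12: "w1 \<in> H" "w2 \<in> H" using that DH by auto
    have l1: "(\<lambda>N. ip (X N) w1) \<longlonglongrightarrow> ip Y w1" "(\<lambda>N. ip (X N) w2) \<longlonglongrightarrow> ip Y w2"
      using that unfolding D_def by auto
    have "(\<lambda>N. cnj a * ip (X N) w1 + ip (X N) w2) \<longlonglongrightarrow> cnj a * ip Y w1 + ip Y w2"
      by (intro tendsto_add tendsto_mult_left l1)
    moreover have "ip (X N) (\<lambda>x. a * w1 x + w2 x) = cnj a * ip (X N) w1 + ip (X N) w2" for N
      by (rule ip_lin_right[OF w12 XH])
    moreover have "ip Y (\<lambda>x. a * w1 x + w2 x) = cnj a * ip Y w1 + ip Y w2"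
      by (rule ip_lin_right[OF w12 YH])
    ultimately show ?thesis unfolding D_def using lc_in[OF w12] by simp
  qed
  have Dcl: "g \<in> D" if un: "\<And>n. v n \<in> D" and g: "g \<in> H" and lim: "(\<lambda>n. nm (\<lambda>x. v n x - g x)) \<longlonglongrightarrow> 0" for v g
  proof -
    have vH: "v n \<in> H" for n using un DH by blast
    define B where "B = nm u + nm Y + 1"
    have Bp: "B > 0" unfolding B_def using nm_nonneg[OF u] nm_nonneg[OF YH] by simp
    have "(\<lambda>N. ip (X N) g) \<longlonglongrightarrow> ip Y g"
      unfolding LIMSEQ_iff
    proof (intro allI impI)
      fix r :: real assume r: "r > 0"
      have "r / (3*B) > 0" using r Bp by simp
      then obtain m where m: "norm (nm (\<lambda>x. v m x - g x) - 0) < r / (3*B)"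
        using lim unfolding LIMSEQ_iff by blast
      hence m': "nm (\<lambda>x. v m x - g x) < r / (3*B)" by simp
      have "(\<lambda>N. ip (X N) (v m)) \<longlonglongrightarrow> ip Y (v m)" using un[of m] unfolding D_def by simp
      then obtain no where no: "\<forall>N\<ge>no. norm (ip (X N) (v m) - ip Y (v m)) < r/3"
        unfolding LIMSEQ_iff using r by (meson zero_less_divide_iff zero_less_numeral)
      show "\<exists>no. \<forall>N\<ge>no. norm (ip (X N) g - ip Y g) < r"
      proof (intro exI allI impI)
        fix N assume N: "no \<le> N"
        define dd where "dd = (\<lambda>x. v m x - g x)"
        have ddH: "dd \<in> H" unfolding dd_def by (rule diff_in[OF vH g])
        have e1: "ip (X N) dd = ip (X N) (v m) - ip (X N) g" unfolding dd_def by (rule ip_diff_right[OF vH g XH])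
        have e2: "ip Y dd = ip Y (v m) - ip Y g" unfolding dd_def by (rule ip_diff_right[OF vH g YH])
        define A where "A = ip (X N) (v m) - ip Y (v m)"
        have "ip (X N) g - ip Y g = A - ip (X N) dd + ip Y dd"
          unfolding e1 e2 A_def by simp
        hence "norm (ip (X N) g - ip Y g) = norm (A - ip (X N) dd + ip Y dd)" by simp
        hence "norm (ip (X N) g - ip Y g) \<le> norm A + norm (ip (X N) dd) + norm (ip Y dd)"
          using norm_triangle_ineq[of "A - ip (X N) dd" "ip Y dd"] norm_triangle_ineq4[of A "ip (X N) dd"]
          by linarith
        also have "\<dots> \<le> r/3 + nm (X N) * nm dd + nm Y * nm dd"
        proof -
          have "norm A < r/3" unfolding A_def using no N by blast
          thus ?thesis using cs[OF XH[of N] ddH] cs[OF YH ddH] by linarith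
        qed
        also have "r/3 + nm (X N) * nm dd + nm Y * nm dd \<le> r/3 + (B - 1) * nm dd"
        proof -
          have "nm (X N) * nm dd \<le> nm u * nm dd" using Xb[of N] nm_nonneg[OF ddH] by (rule mult_right_mono)
          thus ?thesis unfolding B_def by (simp add: algebra_simps)
        qed
        also have "r/3 + (B - 1) * nm dd \<le> r/3 + B * (r / (3*B))"
        proof -
          have "nm dd \<le> r / (3*B)" using m' unfolding dd_def by simp
          hence "(B - 1) * nm dd \<le> B * (r / (3*B))"
            using nm_nonneg[OF ddH] Bp by (intro mult_mono) auto
          thus ?thesis by simp
        qed
        also have "r/3 + B * (r / (3*B)) = 2*r/3" using Bp by simp
        finally show "norm (ip (X N) g - ip Y g) < r" using r by simp
      qed
    qed
    thus ?thesis unfolding D_def using g by simp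
  qed
  have kD: "k \<in> D" if k: "k \<in> H" "\<forall>f\<in>H. f y = ip f k" for k y
  proof -
    have "(\<lambda>N. \<Psi> N y * u y) \<longlonglongrightarrow> \<Phi> y * u y" by (intro tendsto_mult_right pt)
    moreover have "ip (X N) k = \<Psi> N y * u y" for N using k(2) XH[of N] unfolding X_def mult_def by simp
    moreover have "ip Y k = \<Phi> y * u y" using k(2) YH unfolding Y_def mult_def by simp
    ultimately show ?thesis unfolding D_def using k(1) by simp
  qed
  have "\<exists>p\<in>D. \<forall>k\<in>D. ip (\<lambda>x. w x - p x) k = 0" by (rule proj[OF DH D0 Dlc Dcl w])
  then obtain p where pD: "p \<in> D" and orth: "\<forall>k\<in>D. ip (\<lambda>x. w x - p x) k = 0" by (elim bexE)
  have pH: "p \<in> H" using pD DH by blast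
  have "w y - p y = 0" for y
  proof -
    obtain k where k: "k \<in> H" "\<forall>f\<in>H. f y = ip f k" using repr[of y] by blast
    have "(\<lambda>x. w x - p x) y = ip (\<lambda>x. w x - p x) k" by (rule k(2)[rule_format, OF diff_in[OF w pH]])
    also have "\<dots> = 0" using orth kD[OF k] by blast
    finally show ?thesis by simp
  qed
  hence "w = p" by (simp add: fun_eq_iff)
  hence "w \<in> D" using pD by simp
  thus ?thesis unfolding D_def X_def Y_def by simp
qed

lemma main:
  fixes \<phi> :: "nat \<Rightarrow> 'x \<Rightarrow> complex" and \<Phi> :: "'x \<Rightarrow> complex" and f
  assumes phi: "\<And>n. n \<ge> 1 \<Longrightarrow> mult_ball H ip (\<phi> n)" and Phi: "multiplier H ip \<Phi>"
    and pt: "\<And>x. (\<lambda>n. partial_prod \<phi> n x) \<longlonglongrightarrow> \<Phi> x" and f: "f \<in> H"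
  shows "(\<lambda>N. hnorm ip (\<lambda>x. f x - (mult \<Phi> (mult_adj H ip \<Phi> f) x
            + (\<Sum>n\<in>{1..N}. mult (partial_prod \<phi> (n - 1))
                 (Qop H ip (\<phi> n) (mult_adj H ip (partial_prod \<phi> (n - 1)) f)) x))))
         \<longlonglongrightarrow> 0"
proof -
  define pp where "pp m n = (\<lambda>x. \<Prod>i\<in>{Suc m..n}. \<phi> i x)" for m n
  define P where "P n = partial_prod \<phi> n" for n
  have P_pp: "P n = pp 0 n" for n unfolding P_def pp_def partial_prod_def by simp
  have pp_ball: "mult_ball H ip (pp m n)" for m n
  proof (induction n)
    case 0
    have "pp m 0 = (\<lambda>x. 1)" unfolding pp_def by simp
    then show ?case using ball_one by simp
  next
    case (Suc n)
    show ?case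
    proof (cases "Suc n < Suc m")
      case True
      hence "pp m (Suc n) = (\<lambda>x. 1)" unfolding pp_def by simp
      then show ?thesis using ball_one by simp
    next
      case False
      hence "pp m (Suc n) = (\<lambda>x. pp m n x * \<phi> (Suc n) x)" unfolding pp_def by simp
      then show ?thesis using ball_prod[OF Suc.IH phi[of "Suc n"]] by simp
    qed
  qed
  have ppm: "multiplier H ip (pp m n)" for m n by (rule ball_mult[OF pp_ball])
  have Pm: "multiplier H ip (P n)" for n unfolding P_pp by (rule ppm)
  have split: "P m x * pp m n x = P n x" if "m \<le> n" for m n x
  proof -
    have "{Suc 0..m} \<union> {Suc m..n} = {Suc 0..n}" using that by auto
    moreover have "{Suc 0..m} \<inter> {Suc m..n} = {}" by auto
    ultimately show ?thesis unfolding P_pp pp_def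
      using prod.union_disjoint[of "{Suc 0..m}" "{Suc m..n}" "\<lambda>i. \<phi> i x"] by simp
  qed
  have pp1: "pp (n - 1) n = \<phi> n" if "n \<ge> 1" for n
  proof -
    have "{Suc (n-1)..n} = {n}" using that by auto
    thus ?thesis unfolding pp_def by (simp add: fun_eq_iff)
  qed
  have P0: "P 0 = (\<lambda>x. 1)" unfolding P_pp pp_def by simp
  define g where "g n = mult_adj H ip (P n) f" for n
  have gH: "g n \<in> H" for n unfolding g_def by (rule adj_in[OF Pm f])
  have gcomp: "mult_adj H ip (pp m n) (g m) = g n" if mn: "m \<le> n" for m n
  proof (rule adj_unique[OF ppm gH gH])
    fix u assume u: "u \<in> H"
    have "ip (mult (pp m n) u) (g m) = ip (mult (P m) (mult (pp m n) u)) f"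
      unfolding g_def by (rule adj_eq[OF Pm f mult_in[OF ppm u], symmetric])
    also have "mult (P m) (mult (pp m n) u) = mult (P n) u"
      unfolding mult_mult using split[OF mn] by simp
    also have "ip (mult (P n) u) f = ip u (g n)" unfolding g_def by (rule adj_eq[OF Pm f u])
    finally show "ip (mult (pp m n) u) (g m) = ip u (g n)" .
  qed
  have g0: "g 0 = f" unfolding g_def P0
    by (rule adj_unique[OF ball_mult[OF ball_one] f f]) (simp add: mult_one)
  define a where "a n = (nm (g n))^2" for n
  have adec: "a n \<le> a m" if "m \<le> n" for m n
  proof -
    have "nm (g n) \<le> nm (g m)" using adj_contr[OF pp_ball gH, of m n m] gcomp[OF that] by simp
    thus ?thesis unfolding a_def using nm_nonneg[OF gH] by (simp add: power_mono)
  qed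
  define R where "R n = mult (P n) (g n)" for n
  have RH: "R n \<in> H" for n unfolding R_def by (rule mult_in[OF Pm gH])
  have Rb: "(nm (\<lambda>x. R m x - R n x))^2 \<le> a m - a n" if mn: "m \<le> n" for m n
  proof -
    define Q where "Q = Qop H ip (pp m n) (g m)"
    have QH: "Q \<in> H" unfolding Q_def Qop_def
      by (rule diff_in[OF gH mult_in[OF ppm adj_in[OF ppm gH]]])
    have "(\<lambda>x. R m x - R n x) = mult (P m) Q"
    proof
      fix x
      show "R m x - R n x = mult (P m) Q x"
        unfolding Q_def Qop_def mult_def gcomp[OF mn] R_def split[OF mn, of x, symmetric]
        by (simp add: algebra_simps)
    qed
    hence "nm (\<lambda>x. R m x - R n x) \<le> nm Q" using ball_bound[OF pp_ball QH, of 0 m] P_pp by simp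
    hence "(nm (\<lambda>x. R m x - R n x))^2 \<le> (nm Q)^2"
      using nm_nonneg[OF diff_in[OF RH RH]] by (simp add: power_mono)
    also have "\<dots> \<le> (nm (g m))^2 - (nm (mult_adj H ip (pp m n) (g m)))^2"
      unfolding Q_def by (rule qop_bound[OF pp_ball gH])
    finally show ?thesis unfolding a_def gcomp[OF mn] .
  qed
  have "decseq a" unfolding decseq_def using adec by blast
  moreover have "\<forall>i. 0 \<le> a i" unfolding a_def by simp
  ultimately obtain L where "a \<longlonglongrightarrow> L" using decseq_convergent by blast
  hence aC: "Cauchy a" by (rule LIMSEQ_imp_Cauchy)
  have Rcauchy: "\<exists>M. \<forall>m\<ge>M. \<forall>n\<ge>M. nm (\<lambda>x. R m x - R n x) < e" if e: "e > 0" for e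
  proof -
    obtain M where M: "\<forall>m\<ge>M. \<forall>n\<ge>M. norm (a m - a n) < e^2" using CauchyD[OF aC, of "e^2"] e by auto
    have "nm (\<lambda>x. R m x - R n x) < e" if "m \<ge> M" "n \<ge> M" for m n
    proof (cases "m \<le> n")
      case True
      hence "(nm (\<lambda>x. R m x - R n x))^2 < e^2" using Rb[OF True] M that by fastforce
      thus ?thesis using e by (simp add: power2_less_imp_less)
    next
      case False
      hence "(nm (\<lambda>x. R n x - R m x))^2 < e^2" using Rb[of n m] M that by fastforce
      thus ?thesis using e nm_sym[OF RH RH, of m n] by (simp add: power2_less_imp_less)
    qed
    thus ?thesis by blast
  qed
  obtain h where hH: "h \<in> H" and hlim: "(\<lambda>n. nm (\<lambda>x. R n x - h x)) \<longlonglongrightarrow> 0"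
    using complete[OF RH Rcauchy] by blast
  define hP where "hP = mult \<Phi> (mult_adj H ip \<Phi> f)"
  have h_eq: "h = hP"
  proof
    fix y
    obtain k where k: "k \<in> H" "\<forall>u\<in>H. u y = ip u k" using repr[of y] by blast
    have l1: "(\<lambda>n. R n y) \<longlonglongrightarrow> h y"
    proof (rule LIM_zero_cancel)
      show "(\<lambda>n. R n y - h y) \<longlonglongrightarrow> 0"
      proof (rule tendsto_0_le[OF hlim, of _ "nm k"], rule always_eventually, rule allI)
        fix n
        have "R n y - h y = ip (\<lambda>x. R n x - h x) k" using k(2)[rule_format, OF diff_in[OF RH hH]] by simp
        hence "norm (R n y - h y) \<le> nm (\<lambda>x. R n x - h x) * nm k" using cs[OF diff_in[OF RH hH] k(1)] by simp
        thus "norm (R n y - h y) \<le> norm (nm (\<lambda>x. R n x - h x)) * nm k"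
          using nm_nonneg[OF diff_in[OF RH hH]] by simp
      qed
    qed
    have "(\<lambda>n. ip (mult (P n) k) f) \<longlonglongrightarrow> ip (mult \<Phi> k) f"
      by (rule weak[OF pp_ball[of 0] Phi _ k(1) f, unfolded P_pp[symmetric]]) (use pt P_def in simp)
    hence "(\<lambda>n. cnj (ip (mult (P n) k) f)) \<longlonglongrightarrow> cnj (ip (mult \<Phi> k) f)" by (rule tendsto_cnj)
    moreover have "cnj (ip (mult (P n) k) f) = g n y" for n
    proof -
      have "ip (mult (P n) k) f = ip k (g n)" unfolding g_def by (rule adj_eq[OF Pm f k(1)])
      also have "\<dots> = cnj (ip (g n) k)" by (rule ip_sym[OF k(1) gH])
      finally show ?thesis using k(2) gH by simp
    qed
    moreover have "cnj (ip (mult \<Phi> k) f) = mult_adj H ip \<Phi> f y"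
    proof -
      have "ip (mult \<Phi> k) f = ip k (mult_adj H ip \<Phi> f)" by (rule adj_eq[OF Phi f k(1)])
      also have "\<dots> = cnj (ip (mult_adj H ip \<Phi> f) k)" by (rule ip_sym[OF k(1) adj_in[OF Phi f]])
      finally show ?thesis using k(2) adj_in[OF Phi f] by simp
    qed
    ultimately have "(\<lambda>n. g n y) \<longlonglongrightarrow> mult_adj H ip \<Phi> f y" by simp
    moreover have "(\<lambda>n. P n y) \<longlonglongrightarrow> \<Phi> y" unfolding P_def by (rule pt)
    ultimately have "(\<lambda>n. P n y * g n y) \<longlonglongrightarrow> \<Phi> y * mult_adj H ip \<Phi> f y" by (intro tendsto_mult)
    hence "(\<lambda>n. R n y) \<longlonglongrightarrow> hP y" unfolding R_def hP_def mult_def .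
    from LIMSEQ_unique[OF l1 this] show "h y = hP y" .
  qed
  have tm: "mult (P (n - 1)) (Qop H ip (\<phi> n) (mult_adj H ip (P (n - 1)) f)) x = R (n - 1) x - R n x"
    if n: "n \<ge> 1" for n x
  proof -
    have "mult_adj H ip (\<phi> n) (g (n - 1)) = g n" using gcomp[of "n - 1" n] pp1[OF n] by simp
    moreover have "P (n - 1) x * \<phi> n x = P n x" using split[of "n - 1" n x] pp1[OF n] by simp
    ultimately show ?thesis unfolding Qop_def mult_def R_def g_def[symmetric]
      by (simp add: algebra_simps)
  qed
  have tele: "(\<Sum>n\<in>{1..N}. R (n - 1) x - R n x) = R 0 x - R N x" for N x
    by (induction N) (simp_all)
  have R0: "R 0 x = f x" for x unfolding R_def P0 g0 mult_def by simp
  have "(\<lambda>x. f x - (mult \<Phi> (mult_adj H ip \<Phi> f) x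
            + (\<Sum>n\<in>{1..N}. mult (partial_prod \<phi> (n - 1))
                 (Qop H ip (\<phi> n) (mult_adj H ip (partial_prod \<phi> (n - 1)) f)) x))) = (\<lambda>x. R N x - h x)" for N
  proof
    fix x
    have "(\<Sum>n\<in>{1..N}. mult (partial_prod \<phi> (n - 1))
                 (Qop H ip (\<phi> n) (mult_adj H ip (partial_prod \<phi> (n - 1)) f)) x)
          = (\<Sum>n\<in>{1..N}. R (n - 1) x - R n x)"
      by (rule sum.cong[OF refl]) (use tm in \<open>simp add: P_def\<close>)
    thus "f x - (mult \<Phi> (mult_adj H ip \<Phi> f) x + (\<Sum>n\<in>{1..N}. mult (partial_prod \<phi> (n - 1))
                 (Qop H ip (\<phi> n) (mult_adj H ip (partial_prod \<phi> (n - 1)) f)) x)) = R N x - h x"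
      unfolding tele R0 h_eq hP_def by simp
  qed
  thus ?thesis using hlim by simp
qed

end

theorem theorem2p2:
  fixes H :: "('x \<Rightarrow> complex) set"
    and ip :: "('x \<Rightarrow> complex) \<Rightarrow> ('x \<Rightarrow> complex) \<Rightarrow> complex"
    and \<phi> :: "nat \<Rightarrow> 'x \<Rightarrow> complex"
    and \<Phi> :: "'x \<Rightarrow> complex"
    and f :: "'x \<Rightarrow> complex"
  assumes "rkhs H ip"
    and "\<And>n. n \<ge> 1 \<Longrightarrow> mult_ball H ip (\<phi> n)"
    and "multiplier H ip \<Phi>"
    and "\<And>x. (\<lambda>n. partial_prod \<phi> n x) \<longlonglongrightarrow> \<Phi> x"
    and "f \<in> H"
  shows "(\<lambda>N. hnorm ip (\<lambda>x. f x - (mult \<Phi> (mult_adj H ip \<Phi> f) x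
            + (\<Sum>n\<in>{1..N}. mult (partial_prod \<phi> (n - 1))
                 (Qop H ip (\<phi> n) (mult_adj H ip (partial_prod \<phi> (n - 1)) f)) x))))
         \<longlonglongrightarrow> 0"
proof -
  interpret hs H ip by (rule hs.intro) (rule assms(1))
  show ?thesis by (rule main[OF assms(2) assms(3) assms(4) assms(5)])
qed

end
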